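(* Let $K\subseteq\mathbb{R}^d$ be a convex body with $\mathrm{width}(K)>0$. Then $\lambda_d(K-K)\le\frac{\mathrm{Flt}(d)}{\mathrm{width}(K)}$.
   Context: A convex body is a non-empty compact convex subset of $\mathbb{R}^d$; $\mathrm{width}(K)=\min_{u\in(\mathbb{Z}^d)^*\setminus\{0\}}\max_{x,y\in K}|u(x)-u(y)|$; $\mathrm{Flt}(d)=\sup\{\mathrm{width}(K): K\text{ convex body}, K\cap\mathbb{Z}^d=\emptyset\}$. The difference body is $K-K=\{x-y:x,y\in K\}$, and its $d$-th successive minimum is $\lambda_d(K-K)=\inf\{\lambda>0:\dim\mathrm{span}(\lambda(K-K)\cap\mathbb{Z}^d)=d\}$. *)

theory Defs
  imports "HOL-Analysis.Analysis"
begin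

definition int_points :: "(real^'n) set" where
  "int_points = {x. \<forall>i. x $ i \<in> \<int>}"

definition convex_body :: "(real^'n) set \<Rightarrow> bool" where
  "convex_body K \<longleftrightarrow> K \<noteq> {} \<and> compact K \<and> convex K"

text \<open>Lattice width: dual lattice functionals u are integer vectors acting by inner product.\<close>
definition lattice_width :: "(real^'n) set \<Rightarrow> real" where
  "lattice_width K =
     Inf ((\<lambda>u. Sup {\<bar>u \<bullet> x - u \<bullet> y\<bar> | x y. x \<in> K \<and> y \<in> K}) ` (int_points - {0}))"

definition Flt :: "'n::finite itself \<Rightarrow> ereal" where
  "Flt _ = Sup {ereal (lattice_width K) | K :: (real^'n) set.
                   convex_body K \<and> K \<inter> int_points = {}}"

definition diff_body :: "(real^'n) set \<Rightarrow> (real^'n) set" where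
  "diff_body K = {x - y | x y. x \<in> K \<and> y \<in> K}"

text \<open>d-th successive minimum (d = CARD('n)), as an extended real (Inf of empty set = \<infinity>).\<close>
definition lambda_d :: "(real^'n) set \<Rightarrow> ereal" where
  "lambda_d C = Inf {ereal t | t. t > 0 \<and>
       dim (span ((\<lambda>x. t *\<^sub>R x) ` C \<inter> int_points)) = CARD('n)}"

end

theory Submission
  imports Defs
begin

lemma int_points_diff: "x \<in> int_points \<Longrightarrow> y \<in> int_points \<Longrightarrow> x - y \<in> int_points"
  by (auto simp: int_points_def)

lemma axis_int: "axis i 1 \<in> int_points"
  by (auto simp: int_points_def axis_def)

lemma int_points_sub_closed:
  fixes S :: "(real^'n) set"
  assumes "S \<subseteq> int_points"
  shows "closed S"
proof (rule discrete_imp_closed[of 1])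
  show "\<forall>x\<in>S. \<forall>y\<in>S. dist y x < 1 \<longrightarrow> y = x"
  proof (intro ballI impI)
    fix x y assume xy: "x \<in> S" "y \<in> S" "dist y x < 1"
    show "y = x"
    proof (rule vec_eq_iff[THEN iffD2], rule allI)
      fix i
      have "y $ i \<in> \<int>" "x $ i \<in> \<int>" using xy assms by (auto simp: int_points_def)
      hence "y $ i - x $ i \<in> \<int>" by (rule Ints_diff)
      moreover have "\<bar>(y - x) $ i\<bar> \<le> norm (y - x)" by (rule component_le_norm_cart)
      hence "\<bar>y $ i - x $ i\<bar> < 1" using xy(3) by (simp add: dist_norm)
      ultimately have "y $ i - x $ i = 0"
      proof -
        assume a: "y $ i - x $ i \<in> \<int>" "\<bar>y $ i - x $ i\<bar> < 1"
        from a(1) obtain n where n: "y $ i - x $ i = of_int n" by (auto elim: Ints_cases)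
        have "\<bar>n\<bar> < 1" using a(2) unfolding n by (metis of_int_abs of_int_less_1_iff)
        thus ?thesis using n by simp
      qed
      thus "y $ i = x $ i" by simp
    qed
  qed
qed simp

lemma cover_full:
  fixes C :: "(real^'n) set"
  assumes C: "compact C" "C \<noteq> {}"
    and cov: "\<forall>y. \<exists>z\<in>int_points. y - z \<in> C"
  shows "int_points \<subseteq> span ({a - b | a b. a \<in> C \<and> b \<in> C} \<inter> int_points)"
proof (rule ccontr)
  define L where "L = span ({a - b | a b. a \<in> C \<and> b \<in> C} \<inter> int_points)"
  assume "\<not> int_points \<subseteq> span ({a - b | a b. a \<in> C \<and> b \<in> C} \<inter> int_points)"
  then obtain w where w: "w \<in> int_points" "w \<notin> L" unfolding L_def by auto
  obtain c0 where c0: "c0 \<in> C" using C by auto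
  define A where "A = (\<Union>x\<in> int_points \<inter> L. \<Union>y \<in> C. {x + y})"
  define B where "B = (\<Union>x\<in> int_points - L. \<Union>y \<in> C. {x + y})"
  have cA: "closed A" unfolding A_def
    by (rule closed_compact_sums[OF int_points_sub_closed C(1)]) auto
  have cB: "closed B" unfolding B_def
    by (rule closed_compact_sums[OF int_points_sub_closed C(1)]) auto
  have AB: "UNIV \<subseteq> A \<union> B"
  proof
    fix y :: "real^'n"
    obtain z where z: "z \<in> int_points" "y - z \<in> C" using cov by blast
    have "y = z + (y - z)" by simp
    thus "y \<in> A \<union> B" unfolding A_def B_def using z by blast
  qed
  have disj: "A \<inter> B \<inter> UNIV = {}"
  proof (rule ccontr)
    assume "A \<inter> B \<inter> UNIV \<noteq> {}"
    then obtain z1 c1 z2 c2 where h: "z1 \<in> int_points" "z1 \<in> L" "c1 \<in> C"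
        "z2 \<in> int_points" "z2 \<notin> L" "c2 \<in> C" "z1 + c1 = z2 + c2"
      unfolding A_def B_def by auto
    have "z2 - z1 = c1 - c2" using h(7) by (simp add: algebra_simps)
    hence "z2 - z1 \<in> {a - b | a b. a \<in> C \<and> b \<in> C} \<inter> int_points"
      using h int_points_diff by blast
    hence "z2 - z1 \<in> L" unfolding L_def by (rule span_base)
    hence "z1 + (z2 - z1) \<in> L" using h(2) unfolding L_def by (rule span_add[rotated])
    thus False using h(5) by simp
  qed
  have nA: "A \<inter> UNIV \<noteq> {}"
  proof -
    have "0 \<in> int_points" by (simp add: int_points_def)
    moreover have "(0::real^'n) \<in> L" unfolding L_def by (rule span_0)
    ultimately have "0 + c0 \<in> A" unfolding A_def using c0 by blast
    thus ?thesis by blast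
  qed
  have nB: "B \<inter> UNIV \<noteq> {}"
  proof -
    have "w + c0 \<in> B" unfolding B_def using c0 w by blast
    thus ?thesis by blast
  qed
  show False using connected_closed[THEN iffD1, OF connected_UNIV] cA cB AB disj nA nB
    by blast
qed

lemma full_dim:
  fixes K :: "(real^'n) set"
  assumes K: "convex_body K" and t: "t > 0"
    and nlf: "\<And>y. ((\<lambda>k. y - t *\<^sub>R k) ` K) \<inter> int_points \<noteq> {}"
  shows "dim (span ((\<lambda>x. t *\<^sub>R x) ` diff_body K \<inter> int_points)) = CARD('n)"
proof -
  define C where "C = (\<lambda>k. t *\<^sub>R k) ` K"
  have cC: "compact C" "C \<noteq> {}" using K unfolding C_def convex_body_def
    by (auto intro: compact_scaling)
  have cov: "\<forall>y. \<exists>z\<in>int_points. y - z \<in> C"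
  proof
    fix y
    obtain k where k: "k \<in> K" "y - t *\<^sub>R k \<in> int_points" using nlf[of y] by blast
    have "y - (y - t *\<^sub>R k) \<in> C" unfolding C_def using k by auto
    thus "\<exists>z\<in>int_points. y - z \<in> C" using k by blast
  qed
  have eq: "{a - b | a b. a \<in> C \<and> b \<in> C} = (\<lambda>x. t *\<^sub>R x) ` diff_body K"
    unfolding C_def diff_body_def
  proof (intro equalityI subsetI)
    fix v assume "v \<in> {a - b |a b. a \<in> (*\<^sub>R) t ` K \<and> b \<in> (*\<^sub>R) t ` K}"
    then obtain a b where "a \<in> K" "b \<in> K" "v = t *\<^sub>R a - t *\<^sub>R b" by blast
    thus "v \<in> (*\<^sub>R) t ` {x - y |x y. x \<in> K \<and> y \<in> K}"
      by (auto simp: scaleR_diff_right[symmetric])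
  next
    fix v assume "v \<in> (*\<^sub>R) t ` {x - y |x y. x \<in> K \<and> y \<in> K}"
    then obtain a b where "a \<in> K" "b \<in> K" "v = t *\<^sub>R a - t *\<^sub>R b"
      by (auto simp: scaleR_diff_right)
    thus "v \<in> {a - b |a b. a \<in> (*\<^sub>R) t ` K \<and> b \<in> (*\<^sub>R) t ` K}" by blast
  qed
  define P where "P = (\<lambda>x. t *\<^sub>R x) ` diff_body K \<inter> int_points"
  have "int_points \<subseteq> span P"
    using cover_full[OF cC cov] unfolding eq P_def .
  moreover have "Basis \<subseteq> int_points" using axis_inverse axis_int by blast
  ultimately have "Basis \<subseteq> span P" by blast
  hence "span Basis \<subseteq> span P" by (rule span_minimal) (rule subspace_span)
  hence "span P = UNIV" by (auto simp: span_Basis)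
  hence "dim (span P) = dim (UNIV :: (real^'n) set)" by simp
  thus ?thesis unfolding P_def by simp
qed

lemma bdd_diffs:
  fixes K :: "(real^'n) set"
  assumes "bounded K"
  shows "bdd_above {\<bar>u \<bullet> x - u \<bullet> y\<bar> | x y. x \<in> K \<and> y \<in> K}"
proof -
  obtain B where B: "\<forall>a\<in>K. norm a \<le> B" using assms bounded_iff by blast
  show ?thesis
  proof (rule bdd_aboveI, clarify)
    fix x y assume xy: "x \<in> K" "y \<in> K"
    have "\<bar>u \<bullet> x - u \<bullet> y\<bar> = \<bar>u \<bullet> (x - y)\<bar>" by (simp add: inner_diff_right)
    also have "\<dots> \<le> norm u * norm (x - y)" by (rule Cauchy_Schwarz_ineq2)
    also have "\<dots> \<le> norm u * (B + B)"
      proof (rule mult_left_mono)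
      have "norm x \<le> B" "norm y \<le> B" using B xy by auto
      thus "norm (x - y) \<le> B + B" using norm_triangle_ineq4[of x y] by linarith
    qed simp
    finally show "\<bar>u \<bullet> x - u \<bullet> y\<bar> \<le> norm u * (B + B)" .
  qed
qed

lemma width_scale:
  fixes K :: "(real^'n) set"
  assumes K: "convex_body K" and t: "t > 0"
  shows "t * lattice_width K \<le> lattice_width ((\<lambda>k. y - t *\<^sub>R k) ` K)"
proof -
  define S where "S = (\<lambda>(K::(real^'n) set) u. {\<bar>u \<bullet> x - u \<bullet> y\<bar> | x y. x \<in> K \<and> y \<in> K})"
  define K' where "K' = (\<lambda>k. y - t *\<^sub>R k) ` K"
  have bK: "bounded K" using K by (auto simp: convex_body_def compact_imp_bounded)
  have bK': "bounded K'" unfolding K'_def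
    using compact_affinity[of K y "-t"] K
    by (auto simp: convex_body_def compact_imp_bounded)
  obtain k0 where k0: "k0 \<in> K" using K by (auto simp: convex_body_def)
  have U: "int_points - {0} \<noteq> {}"
  proof -
    have "axis undefined 1 \<in> int_points - {0}" using axis_int by (auto simp: axis_eq_0_iff)
    thus ?thesis by blast
  qed
  have SK_ge0: "0 \<le> Sup (S K u)" for u
  proof -
    have "0 \<in> S K u" unfolding S_def using k0 by force
    thus ?thesis using bdd_diffs[OF bK] unfolding S_def by (meson cSup_upper)
  qed
  have step: "t * Sup (S K u) \<le> Sup (S K' u)" for u
  proof -
    have "Sup (S K u) \<le> Sup (S K' u) / t"
    proof (rule cSup_least)
      show "S K u \<noteq> {}" unfolding S_def using k0 by blast
      fix s assume "s \<in> S K u"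
      then obtain a b where ab: "a \<in> K" "b \<in> K" "s = \<bar>u \<bullet> a - u \<bullet> b\<bar>"
        unfolding S_def by blast
      have "t * s = \<bar>u \<bullet> (y - t *\<^sub>R a) - u \<bullet> (y - t *\<^sub>R b)\<bar>"
        proof -
        have "\<bar>u \<bullet> (y - t *\<^sub>R a) - u \<bullet> (y - t *\<^sub>R b)\<bar> = \<bar>t * (u \<bullet> b - u \<bullet> a)\<bar>"
          by (simp add: inner_diff_right algebra_simps)
        also have "\<dots> = t * \<bar>u \<bullet> a - u \<bullet> b\<bar>" using t by (simp add: abs_mult abs_minus_commute)
        finally show ?thesis unfolding ab(3) by simp
      qed
      hence "t * s \<in> S K' u" unfolding S_def K'_def using ab by blast
      hence "t * s \<le> Sup (S K' u)" using bdd_diffs[OF bK'] unfolding S_def by (meson cSup_upper)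
      thus "s \<le> Sup (S K' u) / t" using t by (simp add: field_simps)
    qed
    thus ?thesis using t by (simp add: field_simps)
  qed
  have "lattice_width K = Inf ((\<lambda>u. Sup (S K u)) ` (int_points - {0}))"
    unfolding lattice_width_def S_def by simp
  moreover have "lattice_width K' = Inf ((\<lambda>u. Sup (S K' u)) ` (int_points - {0}))"
    unfolding lattice_width_def S_def by simp
  moreover have "t * Inf ((\<lambda>u. Sup (S K u)) ` (int_points - {0}))
      \<le> Inf ((\<lambda>u. Sup (S K' u)) ` (int_points - {0}))"
  proof (rule cInf_greatest)
    show "(\<lambda>u. Sup (S K' u)) ` (int_points - {0}) \<noteq> {}" using U by blast
    fix v assume "v \<in> (\<lambda>u. Sup (S K' u)) ` (int_points - {0})"
    then obtain u where u: "u \<in> int_points - {0}" "v = Sup (S K' u)" by blast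
    have "Inf ((\<lambda>u. Sup (S K u)) ` (int_points - {0})) \<le> Sup (S K u)"
      by (rule cInf_lower) (use u SK_ge0 in \<open>auto intro!: bdd_belowI[of _ 0]\<close>)
    hence "t * Inf ((\<lambda>u. Sup (S K u)) ` (int_points - {0})) \<le> t * Sup (S K u)"
      using t by simp
    thus "t * Inf ((\<lambda>u. Sup (S K u)) ` (int_points - {0})) \<le> v" using step[of u] u by simp
  qed
  ultimately show ?thesis unfolding K'_def by simp
qed

lemma Flt_upper:
  fixes B :: "(real^'n) set"
  assumes "convex_body B" "B \<inter> int_points = {}"
  shows "ereal (lattice_width B) \<le> Flt TYPE('n)"
  unfolding Flt_def by (rule Sup_upper) (use assms in blast)

lemma Flt_nonneg: "0 \<le> Flt TYPE('n::finite)"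
proof -
  define p :: "real^'n" where "p = (\<chi> i. 1/2)"
  have cb: "convex_body {p}" by (simp add: convex_body_def)
  have lf: "{p} \<inter> int_points = {}"
  proof -
    have "(1/2::real) \<notin> \<int>"
    proof
      assume "(1/2::real) \<in> \<int>"
      then obtain n :: int where "1/2 = (of_int n :: real)" by (auto elim: Ints_cases)
      hence "1 = 2 * (of_int n :: real)" by simp
      hence "1 = 2 * n" by linarith
      thus False by presburger
    qed
    thus ?thesis by (auto simp: int_points_def p_def)
  qed
  have "{\<bar>u \<bullet> x - u \<bullet> y\<bar> | x y. x \<in> {p} \<and> y \<in> {p}} = {0}" for u by auto
  hence "lattice_width {p} = Inf ((\<lambda>u. 0::real) ` (int_points - {0::real^'n}))"
    unfolding lattice_width_def by simp
  also have "\<dots> = 0"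
  proof -
    have "axis undefined 1 \<in> int_points - {0::real^'n}" using axis_int by (auto simp: axis_eq_0_iff)
    hence "(\<lambda>u. 0::real) ` (int_points - {0::real^'n}) = {0}" by blast
    thus ?thesis by simp
  qed
  finally show ?thesis using Flt_upper[OF cb lf] by (simp add: zero_ereal_def)
qed

theorem lemma4p1:
  fixes K :: "(real^'n) set"
  assumes "convex_body K"
    and "lattice_width K > 0"
  shows "lambda_d (diff_body K) \<le> Flt TYPE('n) / ereal (lattice_width K)"
proof -
  define w where "w = lattice_width K"
  have w: "w > 0" using assms(2) w_def by simp
  show ?thesis
  proof (cases "Flt TYPE('n)")
    case PInf
    thus ?thesis using w unfolding w_def[symmetric] by simp
  next
    case MInf
    thus ?thesis using Flt_nonneg[where 'n='n] by simp
  next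
    case (real f)
    have f: "f \<ge> 0" using Flt_nonneg[where 'n='n] real by (simp add: zero_ereal_def)
    have "lambda_d (diff_body K) \<le> ereal (f / w)"
    proof (rule ereal_le_epsilon2)
      fix e :: real assume e: "e > 0"
      define t where "t = f / w + e"
      have t: "t > 0" using f w e unfolding t_def by (simp add: add_nonneg_pos)
      have full: "dim (span ((\<lambda>x. t *\<^sub>R x) ` diff_body K \<inter> int_points)) = CARD('n)"
      proof (rule full_dim[OF assms(1) t])
        fix y
        show "((\<lambda>k. y - t *\<^sub>R k) ` K) \<inter> int_points \<noteq> {}"
        proof
          assume lf: "((\<lambda>k. y - t *\<^sub>R k) ` K) \<inter> int_points = {}"
          have cb: "convex_body ((\<lambda>k. y - t *\<^sub>R k) ` K)"
          proof -
            have "(\<lambda>k. y - t *\<^sub>R k) ` K = (\<lambda>k. y + (-t) *\<^sub>R k) ` K" by simp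
            thus ?thesis using assms(1) compact_affinity[of K y "-t"] convex_affinity[of K y "-t"]
              by (auto simp: convex_body_def)
          qed
          have "ereal (t * w) \<le> ereal (lattice_width ((\<lambda>k. y - t *\<^sub>R k) ` K))"
            using width_scale[OF assms(1) t, of y] unfolding w_def by simp
          also have "\<dots> \<le> ereal f" using Flt_upper[OF cb lf] real by simp
          finally have "t * w \<le> f" by simp
          moreover have "t * w = f + e * w" using w unfolding t_def by (simp add: field_simps)
          moreover have "e * w > 0" using e w by (rule mult_pos_pos)
          ultimately show False by linarith
        qed
      qed
      have "lambda_d (diff_body K) \<le> ereal t"
        unfolding lambda_d_def by (rule Inf_lower) (use t full in blast)
      thus "lambda_d (diff_body K) \<le> ereal (f / w) + ereal e" unfolding t_def by simp
    qed
    thus ?thesis using real w unfolding w_def[symmetric] by simp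
  qed
qed

end
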